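(* Let $k\ge 0$ be an integer, put $K=k+6$ and $M=\dfrac{K}{\gcd(K,60)}$. For all integers $a_0,a_1,a_2$ with $a_0+a_1+a_2=k+3$ (equivalently, for every integral $G_2^{(1)}$-weight of level $k+2$, written in $A_2$ labels as explained in the context), $$D(a_1,a_2)\equiv D(a_0,a_1)\equiv D(a_2,a_0)\pmod M .$$ Equivalently, $\dim_{G_2}(b')\equiv\dim_{G_2}(Jb')\equiv\dim_{G_2}(J^2b')\pmod M$ for every integral level-$(k+2)$ $G_2^{(1)}$-weight $b'$.
   Context: For integers $a_1,a_2$ define $$D(a_1,a_2)=\frac{1}{120}(a_2-a_1)(a_2+1)(2a_2+a_1+3)(a_2+a_1+2)(a_2+2a_1+3)(a_1+1),$$ which is always an integer (it is the formal $G_2$ Weyl dimension). Integral $G_2^{(1)}$-weights of level $k+2$ are triples $(c_0;c_1,c_2)$ of integers (not necessarily nonnegative) with $c_0+2c_1+c_2=k+2$, with formal Weyl dimension $\dim_{G_2}(c_0;c_1,c_2)=\frac1{120}(c_1+1)(c_2+1)(c_1+c_2+2)(2c_1+c_2+3)(3c_1+c_2+4)(3c_1+2c_2+5)$. They correspond bijectively to integer triples $(a_0;a_1,a_2)$ with $a_0+a_1+a_2=k+3$ ("$A_2$ labels") via $\iota'(c_0;c_1,c_2)=(c_0;c_1,c_1+c_2+1)$, and then $\dim_{G_2}(c)=D(a_1,a_2)$. The $A_2$ simple current $J$ acts on $A_2$ labels by $J(a_0;a_1,a_2)=(a_2;a_0,a_1)$; on $G_2$ labels this is $J(c_0;c_1,c_2)=(c_1+c_2+1;c_0,c_1-c_0-1)$.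 *)

theory Defs
  imports Main
begin

text \<open>Formal G2 Weyl dimension in A2 labels. The product is always divisible by 120,
  so integer division is exact.\<close>
definition D :: "int \<Rightarrow> int \<Rightarrow> int" where
  "D a1 a2 = ((a2 - a1) * (a2 + 1) * (2*a2 + a1 + 3) * (a2 + a1 + 2) * (a2 + 2*a1 + 3) * (a1 + 1)) div 120"

end

theory Submission
  imports Defs "HOL-Number_Theory.Cong"
begin

definition F :: "int \<Rightarrow> int \<Rightarrow> int" where
  "F u v = (v - u) * v * (2*v + u) * (v + u) * (v + 2*u) * u"

lemma F_mod: "F (u mod m) (v mod m) mod m = F u v mod m"
proof -
  have a: "[u mod m = u] (mod m)" "[v mod m = v] (mod m)" by (simp_all add: cong_def)
  have "[F (u mod m) (v mod m) = F u v] (mod m)"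
    unfolding F_def by (intro cong_mult cong_add cong_diff cong_refl a)
  then show ?thesis by (simp add: cong_def)
qed

lemma cases8: "(x::int) mod 8 = 0 \<or> x mod 8 = 1 \<or> x mod 8 = 2 \<or> x mod 8 = 3 \<or> x mod 8 = 4 \<or> x mod 8 = 5 \<or> x mod 8 = 6 \<or> x mod 8 = 7"
  by presburger
lemma cases5: "(x::int) mod 5 = 0 \<or> x mod 5 = 1 \<or> x mod 5 = 2 \<or> x mod 5 = 3 \<or> x mod 5 = 4"
  by presburger
lemma cases3: "(x::int) mod 3 = 0 \<or> x mod 3 = 1 \<or> x mod 3 = 2"
  by presburger

lemma F8: "8 dvd F u v"
proof -
  have "F (u mod 8) (v mod 8) mod 8 = 0"
    using cases8[of u] cases8[of v] by (elim disjE; simp add: F_def)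
  then show ?thesis using F_mod[of u 8 v] by (simp add: dvd_eq_mod_eq_0)
qed

lemma F5: "5 dvd F u v"
proof -
  have "F (u mod 5) (v mod 5) mod 5 = 0"
    using cases5[of u] cases5[of v] by (elim disjE; simp add: F_def)
  then show ?thesis using F_mod[of u 5 v] by (simp add: dvd_eq_mod_eq_0)
qed

lemma F3: "3 dvd F u v"
proof -
  have "F (u mod 3) (v mod 3) mod 3 = 0"
    using cases3[of u] cases3[of v] by (elim disjE; simp add: F_def)
  then show ?thesis using F_mod[of u 3 v] by (simp add: dvd_eq_mod_eq_0)
qed

lemma F120: "120 dvd F u v"
proof -
  have "\<And>x::int. 8 dvd x \<Longrightarrow> 3 dvd x \<Longrightarrow> 5 dvd x \<Longrightarrow> 120 dvd x" by presburger
  then show ?thesis using F8[of u v] F3[of u v] F5[of u v] by fast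
qed

definition Qp :: "int \<Rightarrow> int \<Rightarrow> int \<Rightarrow> int" where
  "Qp u v K = - u*K^4 + 5*u*v*K^3 - 10*u*v^2*K^2 + 10*u*v^3*K - 5*u*v^4 - 10*u^2*v*K^2
     + 15*u^2*v^2*K - 10*u^2*v^3 + 5*u^4*v + u^5"

lemma ident: "F (K-u-v) u - F u v = K * (2 * Qp u v K + 5 * (u^2*K*(K-u)*(K+u)))"
  unfolding F_def Qp_def by (simp add: algebra_simps eval_nat_numeral)

lemma even_aux: "even ((u::int)^2*K*(K-u)*(K+u))"
  by (cases "even u"; cases "even K"; auto)

lemma key:
  fixes u v K :: int
  assumes "K > 0"
  shows "(K div gcd K 60) dvd (F (K-u-v) u div 120 - F u v div 120)"
proof -
  obtain t where t: "u^2*K*(K-u)*(K+u) = 2*t" using even_aux[of u K] by blast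
  define R where "R = Qp u v K + 5*t"
  have eq0: "F (K-u-v) u - F u v = K * (2 * Qp u v K + 5 * (2*t))" using ident[of K u v] unfolding t .
  have eq: "F (K-u-v) u - F u v = 2*(K*R)" unfolding eq0 R_def by (simp add: algebra_simps)
  have A: "F (K-u-v) u = 120 * (F (K-u-v) u div 120)" using F120 by simp
  have B: "F u v = 120 * (F u v div 120)" using F120 by simp
  define d where "d = F (K-u-v) u div 120 - F u v div 120"
  have "120 * d = F (K-u-v) u - F u v" unfolding d_def right_diff_distrib
    by (simp only: A[symmetric] B[symmetric])
  then have d60: "60 * d = K * R" using eq by linarith
  define g where "g = gcd K 60"
  have gpos: "g > 0" using assms unfolding g_def by simp
  define M' where "M' = K div g"
  define N where "N = 60 div g"
  have K: "K = g * M'" unfolding M'_def g_def by simp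
  have S: "60 = g * N" unfolding N_def g_def by simp
  have cop: "coprime M' N" unfolding M'_def N_def g_def using assms by (intro div_gcd_coprime) simp
  have "(g * N) * d = (g * M') * R" using d60 by (simp only: K[symmetric] S[symmetric])
  then have "g * (N * d) = g * (M' * R)" by (simp only: mult.assoc)
  then have NM: "N * d = M' * R" using gpos by simp
  have "M' dvd N * d" unfolding NM by simp
  then have "M' dvd d" using cop by (simp add: coprime_dvd_mult_right_iff)
  then show ?thesis unfolding d_def M'_def g_def .
qed

lemma D_F: "D a b = F (a+1) (b+1) div 120"
  unfolding D_def F_def by (simp add: algebra_simps)

theorem theorem2:
  fixes k a0 a1 a2 :: int
  assumes "k \<ge> 0"
    and "a0 + a1 + a2 = k + 3"
  defines "M \<equiv> (k + 6) div gcd (k + 6) 60"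
  shows "D a1 a2 mod M = D a0 a1 mod M \<and> D a0 a1 mod M = D a2 a0 mod M"
proof -
  have Kp: "k + 6 > 0" using assms(1) by simp
  have e0: "a0 + 1 = (k+6) - (a1+1) - (a2+1)" using assms(2) by simp
  have e2: "a2 + 1 = (k+6) - (a0+1) - (a1+1)" using assms(2) by simp
  have 1: "M dvd (D a0 a1 - D a1 a2)"
    using key[OF Kp, of "a1+1" "a2+1"] unfolding M_def D_F e0 .
  have 2: "M dvd (D a2 a0 - D a0 a1)"
    using key[OF Kp, of "a0+1" "a1+1"] unfolding M_def D_F e2 .
  show ?thesis using 1 2 by (simp add: mod_eq_dvd_iff dvd_diff_commute)
qed

end
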